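(* Consider the $n$-agent optimal investment game with exponential (CARA) utilities described in the context. Assume that for every $i\in\{1,\dots,n\}$: $\mu_i>0$, $\nu_i\geq 0$, $\sigma_i\geq 0$, $\nu_i^2+\sigma_i^2>0$, $\delta_i>0$ and $\theta_i\in(0,1)$. Then any constant Nash equilibrium $(\pi_1^*,\dots,\pi_n^* )\in\mathbb{R}^n$ satisfies the coupled system, for all $i\in\{1,\dots,n\}$, $$\mu_i+\frac{1}{\delta_i}\sigma_i\theta_i\widehat{\pi^*\sigma}-\frac{1}{\delta_i}\Big(1-\frac{\theta_i}{n}\Big)(\nu_i^2+\sigma_i^2)\pi_i^*-\lambda_0\beta_i-\lambda_i\alpha_i+\lambda_0\beta_i\, e^{-\frac{1}{\delta_i}\left((1-\frac{\theta_i}{n})\pi_i^*\beta_i-\theta_i\widehat{\pi^*\beta}\right)}+\lambda_i\alpha_i\, e^{-\frac{1}{\delta_i}(1-\frac{\theta_i}{n})\pi_i^*\alpha_i}=0,$$ where $\widehat{\pi^*\sigma}:=\frac1n\sum_{k\neq i}\pi_k^*\sigma_k$ and $\widehat{\pi^*\beta}:=\frac1n\sum_{k\neq i}\pi_k^*\beta_k$. Moreover, if this system has a unique solution, then the constant Nash equilibrium is unique.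
   Context: On a filtered probability space $(\Omega,\mathcal{F},(\mathcal{F}_t)_{t\ge0},\mathbb{P})$ let $B,W^1,\dots,W^n$ be independent standard one-dimensional Brownian motions, and $N^0,N^1,\dots,N^n$ independent Poisson processes (independent of the Brownian motions) with intensities $\lambda_0,\lambda_1,\dots,\lambda_n>0$; let $M^i_t=N^i_t-\lambda_i t$ be the compensated Poisson processes. Fix a horizon $T>0$. There is a riskless bond with zero interest rate, and for each agent $i\in\mathcal{I}=\{1,\dots,n\}$ a stock $S^i$ with $dS^i_t=S^i_{t-}(\mu_i\,dt+\nu_i\,dW^i_t+\sigma_i\,dB_t+\alpha_i\,dM^i_t+\beta_i\,dM^0_t)$, with constants $\mu_i,\nu_i,\sigma_i\in\mathbb{R}$, $\alpha_i,\beta_i\in\mathbb{R}$. Agent $i$ chooses a strategy $\pi^i=(\pi^i_t)_{0\le t\le T}$, the dollar amount invested in $S^i$ (the rest in the bond), self-financing, so her wealth satisfies $dX^i_t=\pi^i_t(\mu_i\,dt+\nu_i\,dW^i_t+\sigma_i\,dB_t+\alpha_i\,dM^i_t+\beta_i\,dM^0_t)$, $X^i_0=x^i_0\in\mathbb{R}$. Her utility is $U_i(x_1,\dots,x_n)=-\exp\!\big(-\frac{1}{\delta_i}(x_i-\theta_i\frac1n\sum_{k=1}^n x_k)\big)$ and her payoff is $J_i(t,x_1,\dots,x_n;\pi^1,\dots,\pi^n)=\mathbb{E}^{t,x_1,\dots,x_n}[U_i(X^1_T,\dots,X^n_T)]$. A tuple $(\pi_1^*,\dots,\pi_n^* )$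 of strategies on $[0,T]$ is a Nash equilibrium if for the initial condition $\vec x=(x^1_0,\dots,x^n_0)$, every agent $i$ and every strategy $\pi_i$, $J_i(0,\vec x;\pi_1^*,\dots,\pi_i^*,\dots,\pi_n^* )\ge J_i(0,\vec x;\pi_1^*,\dots,\pi_{i-1}^*,\pi_i,\pi_{i+1}^*,\dots,\pi_n^* )$. A constant Nash equilibrium is one in which each $\pi_i^*$ is a constant, independent of time and state. *)

theory Defs
  imports "HOL-Probability.Probability"
begin

text \<open>Agents are indexed by 1..n; index 0 of the
  Poisson data refers to the common Poisson process N^0.
  Sources of randomness at the horizon T: B_T, W^i_T (i=1..n), N^k_T (k=0..n).\<close>

datatype src = SB | SW nat | SN nat

definition src_set :: "nat \<Rightarrow> src set" where
  "src_set n = {SB} \<union> SW ` {1..n} \<union> SN ` {0..n}"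

definition src_var :: "('a \<Rightarrow> real) \<Rightarrow> (nat \<Rightarrow> 'a \<Rightarrow> real) \<Rightarrow> (nat \<Rightarrow> 'a \<Rightarrow> real)
    \<Rightarrow> src \<Rightarrow> 'a \<Rightarrow> real" where
  "src_var B W N s = (case s of SB \<Rightarrow> B | SW k \<Rightarrow> W k | SN k \<Rightarrow> N k)"

definition wealth_T ::
  "real \<Rightarrow> (nat \<Rightarrow> real) \<Rightarrow> (nat \<Rightarrow> real) \<Rightarrow> (nat \<Rightarrow> real) \<Rightarrow> (nat \<Rightarrow> real)
   \<Rightarrow> (nat \<Rightarrow> real) \<Rightarrow> (nat \<Rightarrow> real)
   \<Rightarrow> ('a \<Rightarrow> real) \<Rightarrow> (nat \<Rightarrow> 'a \<Rightarrow> real) \<Rightarrow> (nat \<Rightarrow> 'a \<Rightarrow> real)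
   \<Rightarrow> (nat \<Rightarrow> real) \<Rightarrow> (nat \<Rightarrow> real) \<Rightarrow> nat \<Rightarrow> 'a \<Rightarrow> real" where
  "wealth_T T mu nu sg alpha beta lam B W N x st i \<omega> =
     x i + st i * (mu i * T + nu i * W i \<omega> + sg i * B \<omega>
                   + alpha i * (N i \<omega> - lam i * T) + beta i * (N 0 \<omega> - lam 0 * T))"

definition util :: "nat \<Rightarrow> (nat \<Rightarrow> real) \<Rightarrow> (nat \<Rightarrow> real) \<Rightarrow> nat \<Rightarrow> (nat \<Rightarrow> real) \<Rightarrow> real" where
  "util n delta theta i xs =
     - exp (- (1 / delta i) * (xs i - theta i * (1 / real n) * (\<Sum>k=1..n. xs k)))"

definition payoff where
  "payoff M n T mu nu sg alpha beta lam delta theta B W N x st i =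
     integral\<^sup>L M (\<lambda>\<omega>. util n delta theta i
        (\<lambda>k. wealth_T T mu nu sg alpha beta lam B W N x st k \<omega>))"

definition const_NE where
  "const_NE M n T mu nu sg alpha beta lam delta theta B W N x st \<longleftrightarrow>
     (\<forall>i\<in>{1..n}. \<forall>p::real.
        payoff M n T mu nu sg alpha beta lam delta theta B W N x st i \<ge>
        payoff M n T mu nu sg alpha beta lam delta theta B W N x (st(i := p)) i)"

definition NE_system ::
  "nat \<Rightarrow> (nat \<Rightarrow> real) \<Rightarrow> (nat \<Rightarrow> real) \<Rightarrow> (nat \<Rightarrow> real) \<Rightarrow> (nat \<Rightarrow> real) \<Rightarrow> (nat \<Rightarrow> real)
   \<Rightarrow> (nat \<Rightarrow> real) \<Rightarrow> (nat \<Rightarrow> real) \<Rightarrow> (nat \<Rightarrow> real) \<Rightarrow> (nat \<Rightarrow> real) \<Rightarrow> bool" where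
  "NE_system n mu nu sg alpha beta lam delta theta st \<longleftrightarrow>
     (\<forall>i\<in>{1..n}.
       let sig_hat = (1 / real n) * (\<Sum>k\<in>{1..n} - {i}. st k * sg k);
           bet_hat = (1 / real n) * (\<Sum>k\<in>{1..n} - {i}. st k * beta k);
           c = 1 - theta i / real n
       in mu i + (1 / delta i) * sg i * theta i * sig_hat
          - (1 / delta i) * c * ((nu i)\<^sup>2 + (sg i)\<^sup>2) * st i
          - lam 0 * beta i - lam i * alpha i
          + lam 0 * beta i * exp (- (1 / delta i) * (c * st i * beta i - theta i * bet_hat))
          + lam i * alpha i * exp (- (1 / delta i) * c * st i * alpha i) = 0)"

end

theory Submission imports Defs begin

lemma poisson_mgf_pmf:
  fixes r c :: real assumes r: "r > 0"
  shows "integrable (measure_pmf (poisson_pmf r)) (\<lambda>k. exp (c * real k))"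
    and "(\<integral>k. exp (c * real k) \<partial>measure_pmf (poisson_pmf r)) = exp (r * (exp c - 1))"
proof -
  have eq: "\<And>k. pmf (poisson_pmf r) k *\<^sub>R exp (c * real k) = exp (-r) * ((r * exp c) ^ k /\<^sub>R fact k)"
    using r by (simp add: power_mult_distrib exp_of_nat_mult[symmetric] field_simps mult.commute)
  have s: "(\<lambda>k. pmf (poisson_pmf r) k *\<^sub>R exp (c * real k)) sums (exp (-r) * exp (r * exp c))"
    unfolding eq by (intro sums_mult exp_converges)
  have int: "integrable (count_space UNIV) (\<lambda>k. pmf (poisson_pmf r) k *\<^sub>R exp (c * real k))"
    using s r by (subst integrable_count_space_nat_iff) (auto simp: sums_summable)
  show i: "integrable (measure_pmf (poisson_pmf r)) (\<lambda>k. exp (c * real k))"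
    using int by (simp add: measure_pmf_eq_density integrable_density)
  have "(\<integral>k. exp (c * real k) \<partial>measure_pmf (poisson_pmf r)) =
     (\<integral>k. pmf (poisson_pmf r) k *\<^sub>R exp (c * real k) \<partial>count_space UNIV)"
    by (simp add: measure_pmf_eq_density integral_density)
  also have "\<dots> = exp (-r) * exp (r * exp c)"
    using sums_integral_count_space_nat[OF int] s sums_unique2 by blast
  also have "\<dots> = exp (r * (exp c - 1))" by (simp add: exp_add[symmetric] algebra_simps)
  finally show "(\<integral>k. exp (c * real k) \<partial>measure_pmf (poisson_pmf r)) = exp (r * (exp c - 1))" .
qed

lemma poisson_mgf:
  fixes r c :: real and X :: "'a \<Rightarrow> real" assumes r: "r > 0"
    and X: "X \<in> borel_measurable M"
    and law: "distr M borel X = distr (measure_pmf (poisson_pmf r)) borel real"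
  shows "integrable M (\<lambda>\<omega>. exp (c * X \<omega>))"
    and "(\<integral>\<omega>. exp (c * X \<omega>) \<partial>M) = exp (r * (exp c - 1))"
proof -
  have "integrable (distr (measure_pmf (poisson_pmf r)) borel real) (\<lambda>x. exp (c * x))"
    using poisson_mgf_pmf(1)[OF r, of c] by (subst integrable_distr_eq) auto
  then have "integrable (distr M borel X) (\<lambda>x. exp (c * x))" using law by simp
  then show "integrable M (\<lambda>\<omega>. exp (c * X \<omega>))" using X by (subst (asm) integrable_distr_eq) auto
  have "(\<integral>\<omega>. exp (c * X \<omega>) \<partial>M) = (\<integral>x. exp (c * x) \<partial>distr M borel X)"
    using X by (subst integral_distr) auto
  also have "\<dots> = (\<integral>x. exp (c * x) \<partial>distr (measure_pmf (poisson_pmf r)) borel real)" using law by simp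
  also have "\<dots> = exp (r * (exp c - 1))"
    using poisson_mgf_pmf(2)[OF r, of c] by (subst integral_distr) auto
  finally show "(\<integral>\<omega>. exp (c * X \<omega>) \<partial>M) = exp (r * (exp c - 1))" .
qed

lemma normal_mgf_density:
  fixes s c :: real assumes s: "s > 0"
  shows "integrable lborel (\<lambda>x. normal_density 0 s x * exp (c * x))"
    and "(\<integral>x. normal_density 0 s x * exp (c * x) \<partial>lborel) = exp (c^2 * s^2 / 2)"
proof -
  have eq: "\<And>x. normal_density 0 s x * exp (c * x) = exp (c^2 * s^2 / 2) * normal_density (c * s^2) s x"
    unfolding normal_density_def using s
    by (simp add: exp_add[symmetric] field_simps power2_eq_square)
  show "integrable lborel (\<lambda>x. normal_density 0 s x * exp (c * x))" unfolding eq using s by simp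
  show "(\<integral>x. normal_density 0 s x * exp (c * x) \<partial>lborel) = exp (c^2 * s^2 / 2)" unfolding eq using s by simp
qed

lemma normal_mgf:
  fixes T c :: real and X :: "'a \<Rightarrow> real" assumes T: "T > 0"
    and law: "distributed M lborel X (normal_density 0 (sqrt T))"
  shows "integrable M (\<lambda>\<omega>. exp (c * X \<omega>))"
    and "(\<integral>\<omega>. exp (c * X \<omega>) \<partial>M) = exp (c^2 * T / 2)"
proof -
  have s: "sqrt T > 0" using T by simp
  show "integrable M (\<lambda>\<omega>. exp (c * X \<omega>))"
    using distributed_integrable[OF law, of "\<lambda>x. exp (c * x)"] normal_mgf_density(1)[OF s, of c]
    by (simp add: normal_density_nonneg)
  show "(\<integral>\<omega>. exp (c * X \<omega>) \<partial>M) = exp (c^2 * T / 2)"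
    using distributed_integral[OF law, of "\<lambda>x. exp (c * x)"] normal_mgf_density(2)[OF s, of c] T
    by (simp add: normal_density_nonneg)
qed


lemma src_split:
  fixes f :: "src \<Rightarrow> real"
  shows "(\<Sum>s\<in>src_set n. f s) = f SB + (\<Sum>k=1..n. f (SW k)) + f (SN 0) + (\<Sum>k=1..n. f (SN k))"
proof -
  have "(\<Sum>s\<in>src_set n. f s) = f SB + (\<Sum>s\<in>SW ` {1..n}. f s) + (\<Sum>s\<in>SN ` {0..n}. f s)"
    unfolding src_set_def
    by (subst sum.union_disjoint, auto)+ (subst sum.insert, auto)
  also have "(\<Sum>s\<in>SW ` {1..n}. f s) = (\<Sum>k=1..n. f (SW k))"
    by (subst sum.reindex) (auto simp: inj_on_def)
  also have "(\<Sum>s\<in>SN ` {0..n}. f s) = (\<Sum>k=0..n. f (SN k))"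
    by (subst sum.reindex) (auto simp: inj_on_def)
  also have "\<dots> = f (SN 0) + (\<Sum>k=1..n. f (SN k))"
    by (simp add: sum.atLeast_Suc_atMost)
  finally show ?thesis by simp
qed

lemma finite_src_set: "finite (src_set n)" by (simp add: src_set_def)

lemma sum_upd:
  fixes f :: "nat \<Rightarrow> real \<Rightarrow> real"
  assumes "finite A" "i \<in> A"
  shows "(\<Sum>k\<in>A. f k ((q(i:=p)) k)) = f i p + (\<Sum>k\<in>A-{i}. f k (q k))"
proof -
  have "(\<Sum>k\<in>A. f k ((q(i:=p)) k)) = f i p + (\<Sum>k\<in>A-{i}. f k ((q(i:=p)) k))"
    using assms by (simp add: sum.remove)
  also have "(\<Sum>k\<in>A-{i}. f k ((q(i:=p)) k)) = (\<Sum>k\<in>A-{i}. f k (q k))"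
    by (rule sum.cong) auto
  finally show ?thesis .
qed

theorem theorem2p1:
  fixes M :: "'a measure"
    and n :: nat and T :: real
    and mu nu sg alpha beta lam delta theta x :: "nat \<Rightarrow> real"
    and B :: "'a \<Rightarrow> real" and W N :: "nat \<Rightarrow> 'a \<Rightarrow> real"
  assumes "prob_space M"
    and "n \<ge> 1" and "T > 0"
    and lam_pos: "\<forall>k\<in>{0..n}. lam k > 0"
    and B_law: "distributed M lborel B (normal_density 0 (sqrt T))"
    and W_law: "\<forall>k\<in>{1..n}. distributed M lborel (W k) (normal_density 0 (sqrt T))"
    and N_law: "\<forall>k\<in>{0..n}. distr M borel (N k)
                   = distr (measure_pmf (poisson_pmf (lam k * T))) borel real"
    and indep: "prob_space.indep_vars M (\<lambda>_. borel) (src_var B W N) (src_set n)"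
    and params: "\<forall>i\<in>{1..n}. mu i > 0 \<and> nu i \<ge> 0 \<and> sg i \<ge> 0
                   \<and> (nu i)\<^sup>2 + (sg i)\<^sup>2 > 0 \<and> delta i > 0 \<and> 0 < theta i \<and> theta i < 1"
  shows "(\<forall>st. const_NE M n T mu nu sg alpha beta lam delta theta B W N x st
                 \<longrightarrow> NE_system n mu nu sg alpha beta lam delta theta st)
       \<and> ((\<forall>p q. NE_system n mu nu sg alpha beta lam delta theta p
                 \<and> NE_system n mu nu sg alpha beta lam delta theta q
                 \<longrightarrow> (\<forall>i\<in>{1..n}. p i = q i))
          \<longrightarrow> (\<forall>st st'. const_NE M n T mu nu sg alpha beta lam delta theta B W N x st
                 \<and> const_NE M n T mu nu sg alpha beta lam delta theta B W N x st'
                 \<longrightarrow> (\<forall>i\<in>{1..n}. st i = st' i)))"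
proof -
  interpret P: prob_space M by fact
  have rv: "\<And>s. s \<in> src_set n \<Longrightarrow> src_var B W N s \<in> borel_measurable M"
    using indep unfolding P.indep_vars_def by auto
  define d where "d i k = -(1/delta i) * ((if k = i then 1 else 0) - theta i / real n)" for i k
  define cf where "cf i q s = (case s of SB \<Rightarrow> (\<Sum>k=1..n. d i k * q k * sg k)
      | SW k \<Rightarrow> d i k * q k * nu k
      | SN k \<Rightarrow> (if k = 0 then (\<Sum>j=1..n. d i j * q j * beta j) else d i k * q k * alpha k))"
    for i and q :: "nat \<Rightarrow> real" and s
  define K where "K i q = (\<Sum>k=1..n. d i k * (x k + q k * ((mu k - alpha k * lam k - beta k * lam 0) * T)))"
    for i and q :: "nat \<Rightarrow> real"
  define L where "L s c = (case s of SB \<Rightarrow> c^2 * T / 2 | SW k \<Rightarrow> c^2 * T / 2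
      | SN k \<Rightarrow> lam k * T * (exp c - 1))" for s and c :: real
  define G where "G i q = K i q + (\<Sum>s\<in>src_set n. L s (cf i q s))" for i q
  have pt: "util n delta theta i (\<lambda>k. wealth_T T mu nu sg alpha beta lam B W N x q k \<omega>)
      = - exp (K i q + (\<Sum>s\<in>src_set n. cf i q s * src_var B W N s \<omega>))"
    if i: "i \<in> {1..n}" for i q \<omega>
  proof -
    let ?w = "\<lambda>k. wealth_T T mu nu sg alpha beta lam B W N x q k \<omega>"
    have "(\<Sum>k=1..n. (if k = i then 1 else 0) * ?w k) = ?w i"
    proof -
      have "(\<Sum>k=1..n. (if k = i then 1 else 0) * ?w k) = (\<Sum>k=1..n. if k = i then ?w k else 0)"
        by (rule sum.cong) auto
      then show ?thesis using i by simp
    qed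
    then have e1: "- (1 / delta i) * (?w i - theta i * (1 / real n) * (\<Sum>k=1..n. ?w k))
        = (\<Sum>k=1..n. d i k * ?w k)"
    proof -
      have "(\<Sum>k=1..n. d i k * ?w k) = (\<Sum>k=1..n. (-(1/delta i)) * ((if k = i then 1 else 0) * ?w k)
          + (theta i/(real n*delta i)) * ?w k)"
        by (rule sum.cong) (simp_all add: d_def algebra_simps)
      also have "\<dots> = (-(1/delta i)) * (\<Sum>k=1..n. (if k = i then 1 else 0) * ?w k)
          + (theta i/(real n*delta i)) * (\<Sum>k=1..n. ?w k)"
        by (simp only: sum.distrib sum_distrib_left)
      finally show ?thesis using \<open>(\<Sum>k=1..n. (if k = i then 1 else 0) * ?w k) = ?w i\<close>
        by (simp add: algebra_simps)
    qed
    have e2: "d i k * ?w k = d i k * (x k + q k * ((mu k - alpha k * lam k - beta k * lam 0) * T))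
        + (d i k * q k * sg k) * B \<omega> + (d i k * q k * nu k) * W k \<omega>
        + (d i k * q k * alpha k) * N k \<omega> + (d i k * q k * beta k) * N 0 \<omega>" for k
      unfolding wealth_T_def by (simp add: algebra_simps)
    have e3: "(\<Sum>k=1..n. (d i k * q k * alpha k) * N k \<omega>) = (\<Sum>k=1..n. cf i q (SN k) * src_var B W N (SN k) \<omega>)"
      by (rule sum.cong) (auto simp: cf_def src_var_def)
    have "(\<Sum>k=1..n. d i k * ?w k) = K i q + (\<Sum>s\<in>src_set n. cf i q s * src_var B W N s \<omega>)"
      unfolding src_split e2 sum.distrib K_def
      by (simp add: e3[symmetric] sum_distrib_right cf_def src_var_def)
    then show ?thesis unfolding util_def e1 by simp
  qed
  have mgf: "integrable M (\<lambda>\<omega>. exp (cf i q s * src_var B W N s \<omega>))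
      \<and> (\<integral>\<omega>. exp (cf i q s * src_var B W N s \<omega>) \<partial>M) = exp (L s (cf i q s))"
    if s: "s \<in> src_set n" for i q s
  proof (cases s)
    case SB
    then show ?thesis using normal_mgf[OF \<open>T > 0\<close> B_law] by (simp add: src_var_def L_def)
  next
    case (SW k)
    then have "k \<in> {1..n}" using s by (auto simp: src_set_def)
    then have Wd: "distributed M lborel (W k) (normal_density 0 (sqrt T))" using W_law by blast
    show ?thesis using normal_mgf[OF \<open>T > 0\<close> Wd] SW by (simp add: src_var_def L_def)
  next
    case (SN k)
    then have k: "k \<in> {0..n}" using s by (auto simp: src_set_def)
    have r: "lam k * T > 0" using lam_pos k \<open>T > 0\<close> by simp
    have m: "N k \<in> borel_measurable M" using rv[OF s] SN by (simp add: src_var_def)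
    show ?thesis using poisson_mgf[OF r m] N_law k SN by (simp add: src_var_def L_def)
  qed
  have pay: "payoff M n T mu nu sg alpha beta lam delta theta B W N x q i = - exp (G i q)"
    if i: "i \<in> {1..n}" for i q
  proof -
    have ind: "P.indep_vars (\<lambda>_. borel) (\<lambda>s \<omega>. exp (cf i q s * src_var B W N s \<omega>)) (src_set n)"
      by (rule P.indep_vars_compose2[OF indep]) auto
    have "payoff M n T mu nu sg alpha beta lam delta theta B W N x q i
        = (\<integral>\<omega>. - exp (K i q) * (\<Prod>s\<in>src_set n. exp (cf i q s * src_var B W N s \<omega>)) \<partial>M)"
      unfolding payoff_def pt[OF i]
      by (simp add: exp_add exp_sum finite_src_set)
    also have "\<dots> = - exp (K i q) * (\<Prod>s\<in>src_set n. \<integral>\<omega>. exp (cf i q s * src_var B W N s \<omega>) \<partial>M)"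
      by (simp add: P.indep_vars_lebesgue_integral[OF finite_src_set ind] mgf)
    also have "\<dots> = - exp (G i q)"
      by (simp add: mgf G_def exp_add exp_sum finite_src_set cong: prod.cong)
    finally show ?thesis .
  qed
  have Gform: "G i q = K i q + (\<Sum>k=1..n. d i k * q k * sg k)^2 * T / 2
      + (\<Sum>k=1..n. (d i k * q k * nu k)^2 * T / 2)
      + lam 0 * T * (exp (\<Sum>k=1..n. d i k * q k * beta k) - 1)
      + (\<Sum>k=1..n. lam k * T * (exp (d i k * q k * alpha k) - 1))" for i q
  proof -
    have "(\<Sum>k=1..n. L (SN k) (cf i q (SN k))) = (\<Sum>k=1..n. lam k * T * (exp (d i k * q k * alpha k) - 1))"
      by (rule sum.cong) (auto simp: L_def cf_def)
    then show ?thesis unfolding G_def src_split by (simp add: L_def cf_def)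
  qed
  have foc: "NE_system n mu nu sg alpha beta lam delta theta st"
    if ne: "const_NE M n T mu nu sg alpha beta lam delta theta B W N x st" for st
    unfolding NE_system_def Let_def
  proof
    fix i assume i: "i \<in> {1..n}"
    have fin: "finite {1..n}" by simp
    define g where "g p = G i (st(i:=p))" for p
    have min: "g (st i) \<le> g p" for p
    proof -
      have "payoff M n T mu nu sg alpha beta lam delta theta B W N x (st(i:=p)) i
          \<le> payoff M n T mu nu sg alpha beta lam delta theta B W N x st i"
        using ne i by (simp add: const_NE_def)
      then have "G i st \<le> G i (st(i:=p))" by (simp add: pay[OF i])
      then show ?thesis by (simp add: g_def)
    qed
    define Dk where "Dk k = (mu k - alpha k * lam k - beta k * lam 0) * T" for k
    define RK where "RK = (\<Sum>k\<in>{1..n}-{i}. d i k * (x k + st k * Dk k))"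
    define Ss where "Ss = (\<Sum>k\<in>{1..n}-{i}. d i k * st k * sg k)"
    define Rn where "Rn = (\<Sum>k\<in>{1..n}-{i}. (d i k * st k * nu k)^2 * T / 2)"
    define Sb where "Sb = (\<Sum>k\<in>{1..n}-{i}. d i k * st k * beta k)"
    define Ra where "Ra = (\<Sum>k\<in>{1..n}-{i}. lam k * T * (exp (d i k * st k * alpha k) - 1))"
    define di where "di = d i i"
    have gform: "g p = RK + Rn + Ra + di * (x i + p * Dk i) + (di * p * sg i + Ss)^2 * T / 2
      + (di * p * nu i)^2 * T / 2 + lam 0 * T * (exp (di * p * beta i + Sb) - 1)
      + lam i * T * (exp (di * p * alpha i) - 1)" for p
      unfolding g_def Gform K_def
      using sum_upd[OF fin i, of "\<lambda>k v. d i k * (x k + v * Dk k)" st p]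
        sum_upd[OF fin i, of "\<lambda>k v. d i k * v * sg k" st p]
        sum_upd[OF fin i, of "\<lambda>k v. (d i k * v * nu k)^2 * T / 2" st p]
        sum_upd[OF fin i, of "\<lambda>k v. d i k * v * beta k" st p]
        sum_upd[OF fin i, of "\<lambda>k v. lam k * T * (exp (d i k * v * alpha k) - 1)" st p]
      by (simp add: RK_def Ss_def Rn_def Sb_def Ra_def di_def Dk_def)
    define p0 where "p0 = st i"
    define E1 where "E1 = exp (di * p0 * beta i + Sb)"
    define E2 where "E2 = exp (di * p0 * alpha i)"
    have D: "(g has_real_derivative (di * Dk i + T * (di * p0 * sg i + Ss) * (di * sg i)
        + T * (di * p0 * nu i) * (di * nu i) + lam 0 * T * E1 * (di * beta i)
        + lam i * T * E2 * (di * alpha i))) (at p0)"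
      unfolding gform[abs_def] E1_def E2_def
      by (rule derivative_eq_intros refl | simp)+
    have H0: "di * Dk i + T * (di * p0 * sg i + Ss) * (di * sg i)
        + T * (di * p0 * nu i) * (di * nu i) + lam 0 * T * E1 * (di * beta i)
        + lam i * T * E2 * (di * alpha i) = 0"
      by (rule DERIV_local_min[OF D, of 1]) (use min in \<open>auto simp: p0_def\<close>)
    show "mu i + 1 / delta i * sg i * theta i * (1 / real n * (\<Sum>k\<in>{1..n} - {i}. st k * sg k)) -
           1 / delta i * (1 - theta i / real n) * ((nu i)\<^sup>2 + (sg i)\<^sup>2) * st i -
           lam 0 * beta i - lam i * alpha i +
           lam 0 * beta i * exp (- (1 / delta i) * ((1 - theta i / real n) * st i * beta i -
                 theta i * (1 / real n * (\<Sum>k\<in>{1..n} - {i}. st k * beta k)))) +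
           lam i * alpha i * exp (- (1 / delta i) * (1 - theta i / real n) * st i * alpha i) = 0"
      (is "?X = 0")
    proof -
      note H = H0
      define c where "c = 1 - theta i / real n"
      define sh where "sh = 1 / real n * (\<Sum>k\<in>{1..n} - {i}. st k * sg k)"
      define bh where "bh = 1 / real n * (\<Sum>k\<in>{1..n} - {i}. st k * beta k)"
      have dpos: "delta i > 0" and th: "theta i < 1" "theta i > 0" using params i by auto
      have n1: "real n \<ge> 1" using \<open>n \<ge> 1\<close> by simp
      have "theta i / real n < 1" using th n1 by (simp add: divide_less_eq)
      then have cpos: "c > 0" by (simp add: c_def)
      have di: "di = -(1/delta i) * c" by (simp add: di_def d_def c_def)
      have Ss: "Ss = theta i / delta i * sh"
        unfolding Ss_def sh_def sum_distrib_left
        by (rule sum.cong) (auto simp: d_def)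
      have Sb: "Sb = theta i / delta i * bh"
        unfolding Sb_def bh_def sum_distrib_left
        by (rule sum.cong) (auto simp: d_def)
      have E1: "E1 = exp (- (1 / delta i) * (c * st i * beta i - theta i * bh))"
        unfolding E1_def Sb di p0_def by (simp add: algebra_simps)
      have E2: "E2 = exp (- (1 / delta i) * c * st i * alpha i)"
        unfolding E2_def di p0_def by (simp add: algebra_simps)
      have X: "?X = mu i + 1 / delta i * sg i * theta i * sh - 1 / delta i * c * ((nu i)\<^sup>2 + (sg i)\<^sup>2) * p0
          - lam 0 * beta i - lam i * alpha i + lam 0 * beta i * E1 + lam i * alpha i * E2"
        unfolding E1 E2 c_def sh_def bh_def p0_def by simp
      have "T * di * ?X = 0"
        unfolding X using H unfolding Ss di Dk_def
        by (simp add: algebra_simps power2_eq_square)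
      moreover have "T * di \<noteq> 0" using \<open>T > 0\<close> cpos dpos by (simp add: di)
      ultimately show ?thesis by simp
    qed
  qed
  show ?thesis using foc by blast
qed

end
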